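(* Work in dimension $d=2$. Let $\tau=(V,E)$ be a rooted tree and $\sigma$ a bijection of $V$ such that $\sigma.\tau$ is a rooted tree and $F(\tau)=F(\sigma.\tau)$ (as multilinear maps $\mathcal{C}_2^{V}\to\mathcal{C}_2$). Then $\sigma(C_v)=C_v$ for every $v\in V$; consequently $E_\sigma=E$. In particular $F(\sigma.\tau)=F(\tau)$ if and only if $\sigma.\tau=\tau$.
   Context: A rooted tree on a finite vertex set $V\subset\mathbb{N}$ is a set $E$ of ordered pairs of elements of $V$ (an edge $(v,w)$ means $w$ is a child of $v$) such that exactly one vertex $r$ (the root) has no parent, every other vertex has exactly one parent, and every vertex is connected to the root by following parents. $C_v=\{w:(v,w)\in E\}$; $\tau_v$ is the subtree of $v$ and its descendants. For a bijection $\sigma$ of $V$, set $E_\sigma=\{(v,\sigma(w)):(v,w)\in E\}$ and $\sigma.\tau=(V,E_\sigma)$ (each vertex other than $\sigma(r)$ has exactly one parent; it is a rooted tree when it is weakly connected). Note this is not the usual relabelling action. Let $\mathcal{C}_d=C^\infty(\mathbb{R}^d,\mathbb{R}^d)$, $g_j$ the $j$-th coordinate, $\partial_j=\partial/\partial x_j$. For $\tau$ with root $r$ whose children are $v_1,\dots,v_k$, define recursively $F(\tau)((f^i)_{i\in V})=\sum_{j_1,\dots,j_k=1}^d F(\tau_{v_1})((f^i)_{i\in V(\tau_{v_1})})_{j_1}\cdots F(\tau_{v_k})((f^i)_{i\in V(\tau_{v_k})})_{j_k}\,\partial_{j_1}\cdots\partial_{j_k}f^r$ (for a single vertex $F(\tau)=f^r$).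 *)

theory Defs
  imports "HOL-Analysis.Analysis"
begin

definition parents :: "(nat \<times> nat) set \<Rightarrow> nat \<Rightarrow> nat set" where
  "parents E w = {v. (v, w) \<in> E}"

definition children :: "(nat \<times> nat) set \<Rightarrow> nat \<Rightarrow> nat set" where
  "children E v = {w. (v, w) \<in> E}"

definition rooted_tree :: "nat set \<Rightarrow> (nat \<times> nat) set \<Rightarrow> bool" where
  "rooted_tree V E \<longleftrightarrow> finite V \<and> E \<subseteq> V \<times> V \<and>
     (\<exists>!r. r \<in> V \<and> parents E r = {}) \<and>
     (\<forall>r\<in>V. parents E r = {} \<longrightarrow>
        (\<forall>w\<in>V - {r}. card (parents E w) = 1 \<and> finite (parents E w)) \<and>
        (\<forall>w\<in>V. (r, w) \<in> E\<^sup>*))"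

definition tree_root :: "nat set \<Rightarrow> (nat \<times> nat) set \<Rightarrow> nat" where
  "tree_root V E = (THE r. r \<in> V \<and> parents E r = {})"

definition act_edges :: "(nat \<Rightarrow> nat) \<Rightarrow> (nat \<times> nat) set \<Rightarrow> (nat \<times> nat) set" where
  "act_edges \<sigma> E = (\<lambda>(v, w). (v, \<sigma> w)) ` E"

type_synonym field2 = "real^2 \<Rightarrow> real^2"

definition pdiff :: "2 \<Rightarrow> field2 \<Rightarrow> field2" where
  "pdiff j g = (\<lambda>x. frechet_derivative g (at x) (axis j 1))"

definition pdiffs :: "2 list \<Rightarrow> field2 \<Rightarrow> field2" where
  "pdiffs js g = foldr pdiff js g"

text \<open>C-infinity: every iterated partial derivative exists and is (Frechet) differentiable
  everywhere; this is equivalent to the usual notion of smoothness.\<close>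
definition smooth2 :: "field2 \<Rightarrow> bool" where
  "smooth2 g \<longleftrightarrow> (\<forall>js. \<forall>x. pdiffs js g differentiable (at x))"

text \<open>F restricted to the subtree at v, computed with a fuel parameter (fuel at least
  the height of the subtree suffices; card V is always enough).\<close>
fun Fsub :: "nat \<Rightarrow> (nat \<times> nat) set \<Rightarrow> (nat \<Rightarrow> field2) \<Rightarrow> nat \<Rightarrow> field2" where
  "Fsub 0 E f v = f v"
| "Fsub (Suc n) E f v =
     (\<lambda>x. \<Sum>j \<in> PiE (children E v) (\<lambda>_. UNIV).
        (\<Prod>w\<in>children E v. Fsub n E f w x $ j w) *\<^sub>R
        pdiffs (map j (sorted_list_of_set (children E v))) (f v) x)"

definition F_tree :: "nat set \<Rightarrow> (nat \<times> nat) set \<Rightarrow> (nat \<Rightarrow> field2) \<Rightarrow> field2" where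
  "F_tree V E f = Fsub (card V) E f (tree_root V E)"

definition F_equal :: "nat set \<Rightarrow> (nat \<times> nat) set \<Rightarrow> (nat \<times> nat) set \<Rightarrow> bool" where
  "F_equal V E E' \<longleftrightarrow> (\<forall>f. (\<forall>i\<in>V. smooth2 (f i)) \<longrightarrow> F_tree V E f = F_tree V E' f)"

end

theory Submission imports Defs begin

definition monof :: "real \<Rightarrow> nat \<Rightarrow> nat \<Rightarrow> real^2 \<Rightarrow> field2" where
  "monof m a b e = (\<lambda>x. (m * x$1^a * x$2^b) *\<^sub>R e)"

lemma one_neq_two2[simp]: "(1::2) \<noteq> 2" "(2::2) \<noteq> 1"
  by (auto simp: exhaust_2)

lemma hd_nth[derivative_intros]: "((\<lambda>x::real^2. x $ i) has_derivative (\<lambda>h. h $ i)) F"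
  by (rule bounded_linear_imp_has_derivative) (rule bounded_linear_vec_nth)

lemma monof_deriv:
  "(monof m a b e has_derivative
     (\<lambda>h. (m * (real a * x$1^(a-1) * h$1) * x$2^b + m * x$1^a * (real b * x$2^(b-1) * h$2)) *\<^sub>R e)) (at x)"
  unfolding monof_def
  by (auto intro!: derivative_eq_intros simp: algebra_simps)

lemma pdiff_monof1: "pdiff 1 (monof m a b e) = monof (m * real a) (a - 1) b e"
  unfolding pdiff_def
  apply (rule ext)
  apply (subst frechet_derivative_at[OF monof_deriv, symmetric])
  by (simp add: monof_def axis_def)

lemma pdiff_monof2: "pdiff 2 (monof m a b e) = monof (m * real b) a (b - 1) e"
  unfolding pdiff_def
  apply (rule ext)
  apply (subst frechet_derivative_at[OF monof_deriv, symmetric])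
  by (simp add: monof_def axis_def)

definition fall :: "nat \<Rightarrow> nat \<Rightarrow> real" where
  "fall a n = (\<Prod>i<n. real (a - i))"

lemma fall_Suc: "fall a (Suc n) = fall a n * real (a - n)"
  by (simp add: fall_def)

lemma fall_nz: "n \<le> k \<Longrightarrow> fall k n \<noteq> 0"
  by (auto simp: fall_def)

lemma fall_0: "n > 0 \<Longrightarrow> fall 0 n = 0"
  unfolding fall_def by (rule prod_zero) auto

definition cnt :: "2 \<Rightarrow> 2 list \<Rightarrow> nat" where
  "cnt i js = length (filter (\<lambda>j. j = i) js)"

lemma pdiffs_monof:
  "pdiffs js (monof m a b e) =
     monof (m * fall a (cnt 1 js) * fall b (cnt 2 js)) (a - cnt 1 js) (b - cnt 2 js) e"
proof (induction js)
  case Nil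
  then show ?case by (simp add: pdiffs_def cnt_def fall_def)
next
  case (Cons j js)
  have "pdiffs (j # js) (monof m a b e) = pdiff j (pdiffs js (monof m a b e))"
    by (simp add: pdiffs_def)
  also have "\<dots> = pdiff j (monof (m * fall a (cnt 1 js) * fall b (cnt 2 js)) (a - cnt 1 js) (b - cnt 2 js) e)"
    using Cons by simp
  finally show ?case
    using exhaust_2[of j]
    by (auto simp: pdiff_monof1 pdiff_monof2 cnt_def fall_Suc algebra_simps)
qed

lemma monof_smooth: "smooth2 (monof m a b e)"
  unfolding smooth2_def pdiffs_monof differentiable_def using monof_deriv by blast

lemma cnt_map:
  assumes "finite C"
  shows "cnt i (map j (sorted_list_of_set C)) = card {w\<in>C. j w = i}"
proof -
  have "cnt i (map j (sorted_list_of_set C)) = length (filter (\<lambda>w. j w = i) (sorted_list_of_set C))"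
    by (simp add: cnt_def filter_map comp_def)
  also have "\<dots> = card ({w. j w = i} \<inter> C)"
    using assms by (simp add: distinct_length_filter)
  finally show ?thesis by (metis Collect_conj_eq Collect_mem_eq inf_commute)
qed

lemma Fsub_axis:
  assumes "\<And>v. f v = monof (mm v) (aa v) (bb v) (axis (cc v) 1)" "i \<noteq> cc v"
  shows "Fsub n E f v x $ i = 0"
proof (cases n)
  case 0
  then show ?thesis using assms by (simp add: monof_def axis_def)
next
  case (Suc k)
  have p: "pdiffs js (f v) y $ i = 0" for js y
    unfolding assms(1) pdiffs_monof using assms(2) by (simp add: monof_def axis_def)
  show ?thesis unfolding Suc Fsub.simps sum_component vector_scaleR_component p by simp
qed

lemma Fsub_nonzero:
  assumes f: "\<And>v. f v = monof 1 (aa v) (bb v) (axis (cc v) 1)"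
    and fin: "\<And>v. finite (children E v)"
    and ha: "\<And>v. aa v = card {w \<in> children E v. cc w = 1}"
    and hb: "\<And>v. bb v = card {w \<in> children E v. cc w = 2}"
  shows "\<exists>s. s \<noteq> 0 \<and> Fsub n E f v (vec 1) = s *\<^sub>R axis (cc v) 1"
proof (induction n arbitrary: v)
  case 0
  then show ?case by (auto simp: f monof_def)
next
  case (Suc n)
  from Suc obtain S where S: "\<And>w. S w \<noteq> 0 \<and> Fsub n E f w (vec 1) = S w *\<^sub>R axis (cc w) 1"
    by metis
  define C where "C = children E v"
  define j0 where "j0 = restrict cc C"
  let ?g = "\<lambda>j. (\<Prod>w\<in>C. Fsub n E f w (vec 1) $ j w) *\<^sub>R
        pdiffs (map j (sorted_list_of_set C)) (f v) (vec 1)"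
  have finC: "finite C" using fin C_def by auto
  have j0in: "j0 \<in> PiE C (\<lambda>_. UNIV)" by (simp add: j0_def)
  have zero: "?g j = 0" if "j \<in> PiE C (\<lambda>_. UNIV)" "j \<noteq> j0" for j
  proof -
    from that(2) obtain w where w0: "j w \<noteq> j0 w" by auto
    have wC: "w \<in> C"
    proof (rule ccontr)
      assume "w \<notin> C"
      then show False using w0 PiE_arb[OF that(1)] by (simp add: j0_def)
    qed
    have w: "w \<in> C" "j w \<noteq> cc w" using wC w0 by (auto simp: j0_def)
    have "Fsub n E f w (vec 1) $ j w = 0" using S[of w] w by (simp add: axis_def)
    then have "(\<Prod>w\<in>C. Fsub n E f w (vec 1) $ j w) = 0"
      using finC w by (intro prod_zero) auto
    then show ?thesis by simp
  qed
  have "Fsub (Suc n) E f v (vec 1) = (\<Sum>j \<in> PiE C (\<lambda>_. UNIV). ?g j)"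
    by (simp add: C_def)
  also have "\<dots> = sum ?g {j0}"
    using zero j0in finC by (intro sum.mono_neutral_right) (auto simp: finite_PiE)
  also have "\<dots> = ?g j0" by simp
  also have "\<dots> = (\<Prod>w\<in>C. S w) *\<^sub>R pdiffs (map cc (sorted_list_of_set C)) (f v) (vec 1)"
  proof -
    have m1: "map j0 (sorted_list_of_set C) = map cc (sorted_list_of_set C)"
      using finC by (auto simp: j0_def)
    have m2: "(\<Prod>w\<in>C. Fsub n E f w (vec 1) $ j0 w) = (\<Prod>w\<in>C. S w)"
      using S by (intro prod.cong) (auto simp: j0_def)
    show ?thesis unfolding m1 m2 ..
  qed
  also have "\<dots> = ((\<Prod>w\<in>C. S w) * (fall (aa v) (aa v) * fall (bb v) (bb v))) *\<^sub>R axis (cc v) 1"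
  proof -
    have c1: "card {w\<in>C. cc w = 1} = aa v" "card {w\<in>C. cc w = 2} = bb v"
      using ha hb C_def by simp_all
    show ?thesis unfolding f pdiffs_monof cnt_map[OF finC] c1 by (simp add: monof_def)
  qed
  finally show ?case
    using S finC by (intro exI[of _ "(\<Prod>w\<in>C. S w) * (fall (aa v) (aa v) * fall (bb v) (bb v))"])
       (auto simp: fall_nz)
qed


lemma Fsub_zero_at:
  assumes f: "\<And>v. f v = monof (mm v) (aa v) (bb v) (axis (cc v) 1)"
    and finC: "finite (children E v0)"
    and w2: "\<exists>w\<in>children E v0. cc w = 2"
    and b0: "bb v0 = 0"
  shows "Fsub (Suc m) E f v0 x = 0"
proof -
  define C where "C = children E v0"
  have fin: "finite C" using finC C_def by simp
  have tz: "(\<Prod>w\<in>C. Fsub m E f w x $ j w) *\<^sub>R pdiffs (map j (sorted_list_of_set C)) (f v0) x = 0"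
    if "j \<in> PiE C (\<lambda>_. UNIV)" for j
  proof (cases "\<exists>w\<in>C. j w \<noteq> cc w")
    case True
    then obtain w where w: "w \<in> C" "j w \<noteq> cc w" by blast
    have "Fsub m E f w x $ j w = 0" by (rule Fsub_axis[of f mm aa bb cc, OF f w(2)])
    then have "(\<Prod>w\<in>C. Fsub m E f w x $ j w) = 0"
      using fin w by (intro prod_zero) auto
    then show ?thesis by simp
  next
    case False
    then have "{w\<in>C. j w = 2} = {w\<in>C. cc w = 2}" by auto
    moreover have "card {w\<in>C. cc w = 2} > 0"
      using w2 fin C_def by (auto simp: card_gt_0_iff)
    ultimately have "fall (bb v0) (cnt 2 (map j (sorted_list_of_set C))) = 0"
      unfolding cnt_map[OF fin] b0 by (simp add: fall_0)
    then show ?thesis unfolding f pdiffs_monof by (simp add: monof_def)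
  qed
  have "Fsub (Suc m) E f v0 x = (\<Sum>j\<in>PiE C (\<lambda>_. UNIV).
     (\<Prod>w\<in>C. Fsub m E f w x $ j w) *\<^sub>R pdiffs (map j (sorted_list_of_set C)) (f v0) x)"
    by (simp add: C_def)
  also have "\<dots> = 0" by (rule sum.neutral) (intro ballI tz)
  finally show ?thesis .
qed

lemma Fsub_zero_prop:
  assumes z: "\<And>m. Fsub (Suc m) E f v0 x = 0"
    and fin: "\<And>u. finite (children E u)"
  shows "(u, v0) \<in> E ^^ k \<Longrightarrow> Fsub (Suc m + k) E f u x = 0"
proof (induction k arbitrary: u m)
  case 0
  then show ?case using z by simp
next
  case (Suc k)
  obtain y where y: "(u, y) \<in> E" "(y, v0) \<in> E ^^ k" using relpow_Suc_D2[OF Suc.prems] by blast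
  have yc: "y \<in> children E u" using y by (simp add: children_def)
  have yz: "Fsub (Suc m + k) E f y x = 0" by (rule Suc.IH[OF y(2)])
  have yz': "Fsub (Suc m + k) E f y x $ j y = 0" for j unfolding yz by simp
  have pz: "(\<Prod>w\<in>children E u. Fsub (Suc m + k) E f w x $ j w) = 0" for j
    by (rule prod_zero[OF fin[of u]]) (rule bexI[of "\<lambda>w. Fsub (Suc m + k) E f w x $ j w = 0" y, OF yz'[of j] yc])
  have eq: "Suc m + Suc k = Suc (Suc m + k)" by simp
  show ?case unfolding eq Fsub.simps(2) pz by simp
qed

lemma tree_depth:
  assumes t: "rooted_tree V E" and v: "v \<in> V"
  shows "\<exists>k < card V. (tree_root V E, v) \<in> E ^^ k"
proof -
  have finV: "finite V" and sub: "E \<subseteq> V \<times> V" and ex: "\<exists>!r. r \<in> V \<and> parents E r = {}"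
    using t by (auto simp: rooted_tree_def)
  define r where "r = tree_root V E"
  have r: "r \<in> V" "parents E r = {}"
    using theI'[OF ex] unfolding r_def tree_root_def by auto
  have props: "\<forall>w\<in>V - {r}. card (parents E w) = 1" "\<forall>w\<in>V. (r, w) \<in> E\<^sup>*"
    using t r unfolding rooted_tree_def by auto
  have finE: "finite E" using sub finV by (meson finite_SigmaI finite_subset)
  have inj: "inj_on snd E"
  proof (rule inj_onI)
    fix p q assume pq: "p \<in> E" "q \<in> E" "snd p = snd q"
    obtain p1 w where p: "p = (p1, w)" by (cases p)
    obtain q1 where q: "q = (q1, w)" using pq p by (cases q) auto
    have wV: "w \<in> V" using pq p sub by auto
    have inpar: "p1 \<in> parents E w" "q1 \<in> parents E w" using pq p q by (auto simp: parents_def)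
    have "w \<noteq> r" using inpar r by auto
    then have "card (parents E w) = 1" using props wV by auto
    then show "p = q" using inpar p q by (metis card_1_singletonE singletonD)
  qed
  have "snd ` E \<subseteq> V - {r}"
  proof
    fix w assume "w \<in> snd ` E"
    then obtain p where "(p, w) \<in> E" by auto
    then show "w \<in> V - {r}" using sub r by (auto simp: parents_def)
  qed
  then have "card (snd ` E) \<le> card (V - {r})" using finV by (intro card_mono) auto
  then have cE: "card E < card V"
  proof -
    have "card (V - {r}) < card V" using finV r by (meson card_Diff1_less)
    then show ?thesis using card_image[OF inj] \<open>card (snd ` E) \<le> card (V - {r})\<close> by linarith
  qed
  have "(r, v) \<in> E\<^sup>*" using props v by auto
  then obtain k where "k \<le> card E" "(r, v) \<in> E ^^ k"
    using rtrancl_finite_eq_relpow[OF finE] by auto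
  then show ?thesis using cE r_def by (intro exI[of _ k]) auto
qed


theorem proposition3p4:
  fixes V :: "nat set" and E :: "(nat \<times> nat) set" and \<sigma> :: "nat \<Rightarrow> nat"
  assumes "rooted_tree V E"
    and "bij_betw \<sigma> V V"
    and "rooted_tree V (act_edges \<sigma> E)"
  shows "(F_equal V E (act_edges \<sigma> E) \<longrightarrow>
            (\<forall>v\<in>V. \<sigma> ` children E v = children E v) \<and> act_edges \<sigma> E = E)
         \<and> (F_equal V E (act_edges \<sigma> E) \<longleftrightarrow> act_edges \<sigma> E = E)"
proof -
  define E' where "E' = act_edges \<sigma> E"
  have sub: "E \<subseteq> V \<times> V" and finV: "finite V" using assms(1) by (auto simp: rooted_tree_def)
  have sub': "E' \<subseteq> V \<times> V" using assms(3) by (auto simp: rooted_tree_def E'_def)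
  have finch: "finite (children E v)" for v
    by (rule finite_subset[OF _ finV]) (use sub in \<open>auto simp: children_def\<close>)
  have finch': "finite (children E' v)" for v
    by (rule finite_subset[OF _ finV]) (use sub' in \<open>auto simp: children_def\<close>)
  have ch: "children E' v = \<sigma> ` children E v" for v
    by (force simp: E'_def children_def act_edges_def image_iff)
  have key: "\<forall>v\<in>V. \<sigma> ` children E v = children E v" if FE: "F_equal V E E'"
  proof (rule ccontr)
    assume "\<not> (\<forall>v\<in>V. \<sigma> ` children E v = children E v)"
    then obtain v0 where v0: "v0 \<in> V" "\<sigma> ` children E v0 \<noteq> children E v0" by blast
    define C0 where "C0 = children E v0"
    have C0V: "C0 \<subseteq> V" using sub by (auto simp: C0_def children_def)
    have inj: "inj_on \<sigma> C0" using assms(2) C0V by (meson bij_betw_def inj_on_subset)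
    have "\<not> \<sigma> ` C0 \<subseteq> C0"
    proof
      assume "\<sigma> ` C0 \<subseteq> C0"
      then have "\<sigma> ` C0 = C0" using card_subset_eq[OF finch[of v0, folded C0_def]] card_image[OF inj] by blast
      then show False using v0 C0_def by simp
    qed
    then obtain w where w: "w \<in> \<sigma> ` C0" "w \<notin> C0" by blast
    define cc where "cc = (\<lambda>u. if u \<in> C0 then 1 else (2::2))"
    define aa where "aa = (\<lambda>u. card {w \<in> children E u. cc w = 1})"
    define bb where "bb = (\<lambda>u. card {w \<in> children E u. cc w = 2})"
    define f where "f = (\<lambda>u. monof 1 (aa u) (bb u) (axis (cc u) 1))"
    have sm: "\<forall>i\<in>V. smooth2 (f i)" by (simp add: f_def monof_smooth)
    have eqF: "F_tree V E f = F_tree V E' f" using FE sm by (simp add: F_equal_def)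
    obtain s where s: "s \<noteq> 0" "Fsub (card V) E f (tree_root V E) (vec 1) = s *\<^sub>R axis (cc (tree_root V E)) 1"
      using Fsub_nonzero[of f aa bb cc E "card V" "tree_root V E"] finch
      by (auto simp: f_def aa_def bb_def)
    have A: "F_tree V E f (vec 1) \<noteq> 0"
    proof
      assume "F_tree V E f (vec 1) = 0"
      then have "(s *\<^sub>R axis (cc (tree_root V E)) 1 :: real^2) $ cc (tree_root V E) = 0"
        using s(2) by (simp add: F_tree_def)
      then show False using s(1) by simp
    qed
    obtain k where k: "k < card V" "(tree_root V E', v0) \<in> E' ^^ k"
      using tree_depth[OF assms(3)[folded E'_def] v0(1)] by blast
    have bb0: "bb v0 = 0"
    proof -
      have e: "{w \<in> children E v0. cc w = 2} = {}" by (auto simp: cc_def C0_def)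
      show ?thesis unfolding bb_def e by simp
    qed
    have w2: "\<exists>w\<in>children E' v0. cc w = 2" using w ch[of v0] by (auto simp: cc_def C0_def)
    have z: "Fsub (Suc m) E' f v0 (vec 1) = 0" for m
      by (rule Fsub_zero_at[of f "\<lambda>_. 1" aa bb cc E' v0, OF _ finch' w2 bb0]) (simp add: f_def)
    have cV: "card V = Suc (card V - k - 1) + k" using k by simp
    have "Fsub (Suc (card V - k - 1) + k) E' f (tree_root V E') (vec 1) = 0"
      by (rule Fsub_zero_prop[of E' f v0, OF z finch' k(2)])
    then have "F_tree V E' f (vec 1) = 0" unfolding F_tree_def using cV by metis
    then show False using A eqF by simp
  qed
  have edges: "E' = E" if H: "\<forall>v\<in>V. \<sigma> ` children E v = children E v"
  proof
    show "E' \<subseteq> E"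
    proof
      fix p assume "p \<in> E'"
      then obtain v u where vu: "(v, u) \<in> E" "p = (v, \<sigma> u)" by (auto simp: E'_def act_edges_def)
      have "v \<in> V" using vu sub by auto
      moreover have "\<sigma> u \<in> \<sigma> ` children E v" using vu by (auto simp: children_def)
      ultimately have "\<sigma> u \<in> children E v" using H by auto
      then show "p \<in> E" using vu by (simp add: children_def)
    qed
  next
    show "E \<subseteq> E'"
    proof
      fix p assume pE: "p \<in> E"
      obtain v u where p: "p = (v, u)" by (cases p)
      have "v \<in> V" using pE p sub by auto
      moreover have "u \<in> children E v" using pE p by (simp add: children_def)
      ultimately have "u \<in> \<sigma> ` children E v" using H by auto
      then obtain u' where "(v, u') \<in> E" "u = \<sigma> u'" by (auto simp: children_def)
      then show "p \<in> E'" using p by (force simp: E'_def act_edges_def)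
    qed
  qed
  have conv: "F_equal V E E'" if "E' = E" using that by (simp add: F_equal_def)
  show ?thesis using key edges conv unfolding E'_def[symmetric] by blast
qed

end
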